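(* Let $(G,X,\Gamma)$ be a $(\mu,\nu)$-path system group containing a $\delta$-constricting element $(g,A)$ with $\delta$-constricting map $\pi_A\colon X\to A$. There exists $\theta\ge0$ such that for all $x,x'\in X$ and all $m\in\mathbb Z$, $$d_A(x,g^mx')\ge |m|\,[g]^\infty-d_A(x,x')-\theta.$$
   Context: A path is a rectifiable continuous map $\alpha\colon[a,b]\to X$ parametrised by arc length; it is a $(\kappa,\lambda)$-quasi-geodesic if $d(\alpha(t),\alpha(t'))\le|t-t'|\le\kappa d(\alpha(t),\alpha(t'))+\lambda$. A $(\mu,\nu)$-path system group $(G,X,\Gamma)$ is a group $G$ acting properly by isometries on a geodesic metric space $X$ together with a $G$-invariant collection $\Gamma$ of paths closed under subpaths, such that any two points are joined by an element of $\Gamma$ and every element is a $(\mu,\nu)$-quasi-geodesic. A map $\pi_A\colon X\to A$ is $\delta$-constricting if (CS1) $d(x,\pi_A(x))\le\delta$ for $x\in A$, and (CS2) for all $x,y\in X$ and $\gamma\in\Gamma$ joining them, if $d(\pi_A(x),\pi_A(y))>\delta$ then $\gamma$ meets $B_X(\pi_A(x),\delta)$ and $B_X(\pi_A(y),\delta)$. An element $g$ is $\delta$-constricting, written $(g,A)$, if it has infinite order and $A$ is a $\langle g\rangle$-invariant subset with a $\delta$-constricting map $\pi_A$, on which $\langle g\rangle$ acts $\delta$-coboundedly. $d_A(x,y)=d(\pi_A(x),\pi_A(y))$. The asymptotic translation length is $[g]^\infty=\limsup_{m\to\infty}\frac1m d(o,g^mo)$ for any $o\in X$. *)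

theory Defs
  imports "HOL-Analysis.Analysis" "HOL-Algebra.Group_Action"
begin

text \<open>A path is represented as a triple (a, b, alpha) with a \<le> b, alpha restricted to [a,b].\<close>
type_synonym 'x rpath = "real \<times> real \<times> (real \<Rightarrow> 'x)"

definition curve_length :: "(real \<Rightarrow> 'x::metric_space) \<Rightarrow> real \<Rightarrow> real \<Rightarrow> ereal" where
  "curve_length \<alpha> s t =
     (SUP np \<in> {(n::nat, p::nat \<Rightarrow> real). p 0 = s \<and> p n = t \<and> (\<forall>i<n. p i \<le> p (Suc i))}.
        ereal (\<Sum>i<fst np. dist (\<alpha> (snd np i)) (\<alpha> (snd np (Suc i)))))"

definition is_path :: "'x::metric_space rpath \<Rightarrow> bool" where
  "is_path P = (case P of (a, b, \<alpha>) \<Rightarrow>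
      a \<le> b \<and> continuous_on {a..b} \<alpha> \<and> curve_length \<alpha> a b < \<infinity> \<and>
      (\<forall>s t. a \<le> s \<longrightarrow> s \<le> t \<longrightarrow> t \<le> b \<longrightarrow> curve_length \<alpha> s t = ereal (t - s)))"

definition quasi_geodesic :: "real \<Rightarrow> real \<Rightarrow> 'x::metric_space rpath \<Rightarrow> bool" where
  "quasi_geodesic k l P = (case P of (a, b, \<alpha>) \<Rightarrow> is_path P \<and>
      (\<forall>t\<in>{a..b}. \<forall>t'\<in>{a..b}. dist (\<alpha> t) (\<alpha> t') \<le> \<bar>t - t'\<bar> \<and>
                                \<bar>t - t'\<bar> \<le> k * dist (\<alpha> t) (\<alpha> t') + l))"

definition joins :: "'x rpath \<Rightarrow> 'x \<Rightarrow> 'x \<Rightarrow> bool" where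
  "joins P x y = (case P of (a, b, \<alpha>) \<Rightarrow> \<alpha> a = x \<and> \<alpha> b = y)"

definition meets :: "'x rpath \<Rightarrow> 'x set \<Rightarrow> bool" where
  "meets P S = (case P of (a, b, \<alpha>) \<Rightarrow> (\<exists>t\<in>{a..b}. \<alpha> t \<in> S))"

definition geodesic_space :: "'x::metric_space itself \<Rightarrow> bool" where
  "geodesic_space _ = (\<forall>x y::'x. \<exists>\<gamma>::real \<Rightarrow> 'x. \<gamma> 0 = x \<and> \<gamma> (dist x y) = y \<and>
      (\<forall>s\<in>{0..dist x y}. \<forall>t\<in>{0..dist x y}. dist (\<gamma> s) (\<gamma> t) = \<bar>s - t\<bar>))"

definition proper_isometric_action :: "('g, 'b) monoid_scheme \<Rightarrow> ('g \<Rightarrow> 'x::metric_space \<Rightarrow> 'x) \<Rightarrow> bool" where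
  "proper_isometric_action G \<phi> =
     (group_action G (UNIV :: 'x set) \<phi> \<and>
      (\<forall>g\<in>carrier G. \<forall>x y. dist (\<phi> g x) (\<phi> g y) = dist x y) \<and>
      (\<forall>B::'x set. bounded B \<longrightarrow> finite {g \<in> carrier G. \<phi> g ` B \<inter> B \<noteq> {}}))"

definition path_system_group ::
  "real \<Rightarrow> real \<Rightarrow> ('g, 'b) monoid_scheme \<Rightarrow> ('g \<Rightarrow> 'x::metric_space \<Rightarrow> 'x) \<Rightarrow> 'x rpath set \<Rightarrow> bool" where
  "path_system_group \<mu> \<nu> G \<phi> \<Gamma> =
     (geodesic_space TYPE('x) \<and> proper_isometric_action G \<phi> \<and>
      (\<forall>g\<in>carrier G. \<forall>(a, b, \<alpha>)\<in>\<Gamma>. (a, b, \<phi> g \<circ> \<alpha>) \<in> \<Gamma>) \<and>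
      (\<forall>(a, b, \<alpha>)\<in>\<Gamma>. \<forall>s t. a \<le> s \<longrightarrow> s \<le> t \<longrightarrow> t \<le> b \<longrightarrow> (s, t, \<alpha>) \<in> \<Gamma>) \<and>
      (\<forall>x y. \<exists>P\<in>\<Gamma>. joins P x y) \<and>
      (\<forall>P\<in>\<Gamma>. quasi_geodesic \<mu> \<nu> P))"

definition constricting_map ::
  "'x rpath set \<Rightarrow> real \<Rightarrow> 'x::metric_space set \<Rightarrow> ('x \<Rightarrow> 'x) \<Rightarrow> bool" where
  "constricting_map \<Gamma> \<delta> A \<pi> =
     ((\<forall>x. \<pi> x \<in> A) \<and>
      (\<forall>x\<in>A. dist x (\<pi> x) \<le> \<delta>) \<and>
      (\<forall>x y. \<forall>P\<in>\<Gamma>. joins P x y \<longrightarrow> dist (\<pi> x) (\<pi> y) > \<delta> \<longrightarrow>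
          meets P (cball (\<pi> x) \<delta>) \<and> meets P (cball (\<pi> y) \<delta>)))"

definition constricting_element ::
  "('g, 'b) monoid_scheme \<Rightarrow> ('g \<Rightarrow> 'x::metric_space \<Rightarrow> 'x) \<Rightarrow> 'x rpath set \<Rightarrow> real \<Rightarrow>
   'g \<Rightarrow> 'x set \<Rightarrow> ('x \<Rightarrow> 'x) \<Rightarrow> bool" where
  "constricting_element G \<phi> \<Gamma> \<delta> g A \<pi> =
     (g \<in> carrier G \<and> (\<forall>n::nat. n > 0 \<longrightarrow> g [^]\<^bsub>G\<^esub> n \<noteq> \<one>\<^bsub>G\<^esub>) \<and>
      (\<forall>m::int. \<phi> (g [^]\<^bsub>G\<^esub> m) ` A = A) \<and>
      constricting_map \<Gamma> \<delta> A \<pi> \<and>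
      (\<exists>a\<in>A. \<forall>y\<in>A. \<exists>m::int. dist (\<phi> (g [^]\<^bsub>G\<^esub> m) a) y \<le> \<delta>))"

definition proj_dist :: "('x \<Rightarrow> 'x::metric_space) \<Rightarrow> 'x \<Rightarrow> 'x \<Rightarrow> real" where
  "proj_dist \<pi> x y = dist (\<pi> x) (\<pi> y)"

definition asymp_transl :: "('g, 'b) monoid_scheme \<Rightarrow> ('g \<Rightarrow> 'x::metric_space \<Rightarrow> 'x) \<Rightarrow> 'g \<Rightarrow> 'x \<Rightarrow> ereal" where
  "asymp_transl G \<phi> g x0 =
     limsup (\<lambda>m::nat. ereal (dist x0 (\<phi> (g [^]\<^bsub>G\<^esub> m) x0) / real m))"

end

theory Submission
  imports Defs
begin

lemma act_inv:
  assumes ga: "group_action G UNIV \<phi>" and h: "h \<in> carrier G"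
  shows "\<phi> (inv\<^bsub>G\<^esub> h) (\<phi> h x) = x" "\<phi> h (\<phi> (inv\<^bsub>G\<^esub> h) x) = x"
proof -
  have grp: "group G" using ga unfolding group_action_def group_hom_def by blast
  have one: "\<phi> \<one>\<^bsub>G\<^esub> y = y" for y
    using group_action.id_eq_one[OF ga] by (metis UNIV_I restrict_apply')
  have ih: "inv\<^bsub>G\<^esub> h \<in> carrier G" using grp h by (simp add: group.inv_closed)
  show "\<phi> (inv\<^bsub>G\<^esub> h) (\<phi> h x) = x"
    using group_action.composition_rule[OF ga UNIV_I ih h, of x] group.l_inv[OF grp h] one by simp
  show "\<phi> h (\<phi> (inv\<^bsub>G\<^esub> h) x) = x"
    using group_action.composition_rule[OF ga UNIV_I h ih, of x] group.r_inv[OF grp h] one by simp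
qed

lemma tri3: "dist (a::'a::metric_space) d \<le> dist a b + dist b c + dist c d"
  using dist_triangle[of a d b] dist_triangle[of b d c] by linarith

lemma uniq_proj:
  fixes \<pi> \<psi> :: "'x::metric_space \<Rightarrow> 'x"
  assumes Qg: "\<forall>P\<in>\<Gamma>. quasi_geodesic \<mu> \<nu> P"
    and sub: "\<forall>(a, b, \<alpha>)\<in>\<Gamma>. \<forall>s t. a \<le> s \<longrightarrow> s \<le> t \<longrightarrow> t \<le> b \<longrightarrow> (s, t, \<alpha>) \<in> \<Gamma>"
    and join: "\<forall>x y. \<exists>P\<in>\<Gamma>. joins P x y"
    and cp: "constricting_map \<Gamma> \<delta> A \<pi>" and cq: "constricting_map \<Gamma> \<delta> A \<psi>"
    and d0: "\<delta> \<ge> 0"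
  shows "dist (\<pi> z) (\<psi> z) \<le> \<bar>\<mu>\<bar> * \<delta> + \<bar>\<nu>\<bar> + 4 * \<delta>"
proof -
  note cpd = cp[unfolded constricting_map_def] and cqd = cq[unfolded constricting_map_def]
  have qgb: "\<bar>t - t'\<bar> \<le> \<mu> * dist (\<alpha> t) (\<alpha> t') + \<nu>"
    if "(a, b, \<alpha>) \<in> \<Gamma>" "t \<in> {a..b}" "t' \<in> {a..b}" for a b \<alpha> t t'
    using Qg that unfolding quasi_geodesic_def by fastforce
  have qgd: "dist (\<alpha> t) (\<alpha> t') \<le> \<bar>t - t'\<bar>"
    if "(a, b, \<alpha>) \<in> \<Gamma>" "t \<in> {a..b}" "t' \<in> {a..b}" for a b \<alpha> t t'
    using Qg that unfolding quasi_geodesic_def by fastforce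
  have mub: "\<mu> * d + \<nu> \<le> \<bar>\<mu>\<bar> * \<delta> + \<bar>\<nu>\<bar>" if "0 \<le> d" "d \<le> \<delta>" for d
  proof -
    have "\<mu> * d \<le> \<bar>\<mu>\<bar> * d" using that by (simp add: mult_right_mono)
    also have "\<dots> \<le> \<bar>\<mu>\<bar> * \<delta>" using that by (simp add: mult_left_mono)
    finally show ?thesis by linarith
  qed
  have lip: "dist (\<psi> w) (\<psi> p) \<le> 2 * \<delta> + \<bar>\<mu>\<bar> * \<delta> + \<bar>\<nu>\<bar>" if "dist w p \<le> \<delta>" for w p
  proof (cases "dist (\<psi> w) (\<psi> p) > \<delta>")
    case False thus ?thesis using d0 by (smt (verit) abs_ge_zero mult_nonneg_nonneg)
  next
    case True
    obtain P where P: "P \<in> \<Gamma>" "joins P w p" using join by blast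
    obtain a2 b2 \<beta> where Pe: "P = (a2, b2, \<beta>)" by (cases P) auto
    have m: "meets P (cball (\<psi> w) \<delta>) \<and> meets P (cball (\<psi> p) \<delta>)"
      using cqd P True by blast
    then obtain t1 t2 where t: "t1 \<in> {a2..b2}" "t2 \<in> {a2..b2}"
      "dist (\<psi> w) (\<beta> t1) \<le> \<delta>" "dist (\<psi> p) (\<beta> t2) \<le> \<delta>"
      unfolding Pe meets_def by auto
    have ab: "a2 \<in> {a2..b2}" "b2 \<in> {a2..b2}" using t by auto
    have "\<beta> a2 = w" "\<beta> b2 = p" using P(2) unfolding Pe joins_def by auto
    have "\<bar>a2 - b2\<bar> \<le> \<mu> * dist w p + \<nu>"
      using qgb[OF P(1)[unfolded Pe] ab] \<open>\<beta> a2 = w\<close> \<open>\<beta> b2 = p\<close> by simp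
    also have "\<dots> \<le> \<bar>\<mu>\<bar> * \<delta> + \<bar>\<nu>\<bar>" using mub that by simp
    finally have L: "\<bar>a2 - b2\<bar> \<le> \<bar>\<mu>\<bar> * \<delta> + \<bar>\<nu>\<bar>" .
    have "dist (\<beta> t1) (\<beta> t2) \<le> \<bar>t1 - t2\<bar>" using qgd[OF P(1)[unfolded Pe] t(1,2)] .
    also have "\<dots> \<le> \<bar>a2 - b2\<bar>" using t(1,2) by auto
    finally have "dist (\<beta> t1) (\<beta> t2) \<le> \<bar>\<mu>\<bar> * \<delta> + \<bar>\<nu>\<bar>" using L by linarith
    moreover have "dist (\<psi> w) (\<psi> p) \<le> dist (\<psi> w) (\<beta> t1) + dist (\<beta> t1) (\<beta> t2) + dist (\<beta> t2) (\<psi> p)"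
      by (rule tri3)
    ultimately show ?thesis using t(3,4) by (simp add: dist_commute)
  qed
  define p where "p = \<pi> z"
  define q where "q = \<psi> z"
  have qA: "q \<in> A" using cqd q_def by blast
  have pA: "p \<in> A" using cpd p_def by blast
  show ?thesis
  proof (cases "dist p (\<pi> q) \<le> \<delta>")
    case True
    have "dist q (\<pi> q) \<le> \<delta>" using cpd qA by blast
    hence "dist p q \<le> 2 * \<delta>" using True dist_triangle[of p q "\<pi> q"] by (simp add: dist_commute)
    thus ?thesis unfolding p_def q_def using d0 by (smt (verit) abs_ge_zero mult_nonneg_nonneg)
  next
    case False
    obtain P where P: "P \<in> \<Gamma>" "joins P z q" using join by blast
    obtain a b \<alpha> where Pe: "P = (a, b, \<alpha>)" by (cases P) auto
    have "meets P (cball p \<delta>)" using cpd P False p_def by auto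
    then obtain s where s: "s \<in> {a..b}" "dist p (\<alpha> s) \<le> \<delta>" unfolding Pe meets_def by auto
    have az: "\<alpha> a = z" "\<alpha> b = q" using P(2) unfolding Pe joins_def by auto
    have Q: "(a, s, \<alpha>) \<in> \<Gamma>" using sub P(1) s unfolding Pe by fastforce
    have jQ: "joins (a, s, \<alpha>) z (\<alpha> s)" using az unfolding joins_def by simp
    show ?thesis
    proof (cases "dist q (\<psi> (\<alpha> s)) > \<delta>")
      case True
      have "meets (a, s, \<alpha>) (cball q \<delta>)" using cqd Q jQ True q_def by blast
      then obtain t where t: "t \<in> {a..s}" "dist q (\<alpha> t) \<le> \<delta>" unfolding meets_def by auto
      have tb: "t \<in> {a..b}" "b \<in> {a..b}" using t s by auto
      have "\<bar>t - b\<bar> \<le> \<mu> * dist (\<alpha> t) (\<alpha> b) + \<nu>" using qgb[OF P(1)[unfolded Pe] tb] .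
      also have "\<dots> \<le> \<bar>\<mu>\<bar> * \<delta> + \<bar>\<nu>\<bar>" using mub t(2) az by (simp add: dist_commute)
      finally have L: "\<bar>t - b\<bar> \<le> \<bar>\<mu>\<bar> * \<delta> + \<bar>\<nu>\<bar>" .
      have "dist (\<alpha> t) (\<alpha> s) \<le> \<bar>t - s\<bar>" using qgd[OF P(1)[unfolded Pe] tb(1) s(1)] .
      also have "\<dots> \<le> \<bar>t - b\<bar>" using t s by auto
      finally have "dist (\<alpha> t) (\<alpha> s) \<le> \<bar>\<mu>\<bar> * \<delta> + \<bar>\<nu>\<bar>" using L by linarith
      moreover have "dist p q \<le> dist p (\<alpha> s) + dist (\<alpha> s) (\<alpha> t) + dist (\<alpha> t) q"
        by (rule tri3)
      ultimately have "dist p q \<le> 2 * \<delta> + \<bar>\<mu>\<bar> * \<delta> + \<bar>\<nu>\<bar>"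
        using s(2) t(2) by (simp add: dist_commute)
      thus ?thesis unfolding p_def q_def using d0 by linarith
    next
      case False
      have l: "dist (\<psi> (\<alpha> s)) (\<psi> p) \<le> 2 * \<delta> + \<bar>\<mu>\<bar> * \<delta> + \<bar>\<nu>\<bar>"
        using lip s(2) by (simp add: dist_commute)
      have "dist p (\<psi> p) \<le> \<delta>" using cqd pA by blast
      moreover have "dist p q \<le> dist q (\<psi> (\<alpha> s)) + dist (\<psi> (\<alpha> s)) (\<psi> p) + dist (\<psi> p) p"
        using tri3[of q p "\<psi> (\<alpha> s)" "\<psi> p"] dist_commute[of p q] by linarith
      ultimately have "dist p q \<le> 4 * \<delta> + \<bar>\<mu>\<bar> * \<delta> + \<bar>\<nu>\<bar>"
        using False l by (simp add: dist_commute)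
      thus ?thesis unfolding p_def q_def by linarith
    qed
  qed
qed

lemma ga_group: "group_action G UNIV \<phi> \<Longrightarrow> group G"
  unfolding group_action_def group_hom_def by blast

lemma conj_map:
  fixes \<phi> :: "'g \<Rightarrow> 'x::metric_space \<Rightarrow> 'x"
  assumes ga: "group_action G UNIV \<phi>"
    and iso: "\<forall>g\<in>carrier G. \<forall>x y. dist (\<phi> g x) (\<phi> g y) = dist x y"
    and inv: "\<forall>g\<in>carrier G. \<forall>(a, b, \<alpha>)\<in>\<Gamma>. (a, b, \<phi> g \<circ> \<alpha>) \<in> \<Gamma>"
    and h: "h \<in> carrier G" and hA: "\<phi> h ` A = A" and hiA: "\<phi> (inv\<^bsub>G\<^esub> h) ` A = A"
    and cp: "constricting_map \<Gamma> \<delta> A \<pi>"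
  shows "constricting_map \<Gamma> \<delta> A (\<lambda>z. \<phi> h (\<pi> (\<phi> (inv\<^bsub>G\<^esub> h) z)))"
proof -
  note cpd = cp[unfolded constricting_map_def]
  define hi where "hi = inv\<^bsub>G\<^esub> h"
  have hi: "hi \<in> carrier G" using ga_group[OF ga] h hi_def by (simp add: group.inv_closed)
  have c1: "\<phi> hi (\<phi> h x) = x" "\<phi> h (\<phi> hi x) = x" for x
    using act_inv[OF ga h] hi_def by auto
  have A1: "\<forall>x. \<phi> h (\<pi> (\<phi> hi x)) \<in> A" using cpd hA by blast
  have A2: "dist x (\<phi> h (\<pi> (\<phi> hi x))) \<le> \<delta>" if "x \<in> A" for x
  proof -
    have w: "\<phi> hi x \<in> A" using that hiA hi_def by blast
    have "dist x (\<phi> h (\<pi> (\<phi> hi x))) = dist (\<phi> h (\<phi> hi x)) (\<phi> h (\<pi> (\<phi> hi x)))" using c1 by simp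
    also have "\<dots> = dist (\<phi> hi x) (\<pi> (\<phi> hi x))" using iso h by blast
    finally show ?thesis using cpd w by auto
  qed
  have A3: "meets P (cball (\<phi> h (\<pi> (\<phi> hi x))) \<delta>) \<and> meets P (cball (\<phi> h (\<pi> (\<phi> hi y))) \<delta>)"
    if P: "P \<in> \<Gamma>" "joins P x y" and d: "dist (\<phi> h (\<pi> (\<phi> hi x))) (\<phi> h (\<pi> (\<phi> hi y))) > \<delta>" for x y P
  proof -
    obtain a b \<alpha> where Pe: "P = (a, b, \<alpha>)" by (cases P) auto
    have P': "(a, b, \<phi> hi \<circ> \<alpha>) \<in> \<Gamma>" using inv hi P(1) Pe by fastforce
    have j: "joins (a, b, \<phi> hi \<circ> \<alpha>) (\<phi> hi x) (\<phi> hi y)" using P(2) Pe by (simp add: joins_def)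
    have "dist (\<pi> (\<phi> hi x)) (\<pi> (\<phi> hi y)) > \<delta>" using d iso h by simp
    hence m: "meets (a, b, \<phi> hi \<circ> \<alpha>) (cball (\<pi> (\<phi> hi x)) \<delta>) \<and> meets (a, b, \<phi> hi \<circ> \<alpha>) (cball (\<pi> (\<phi> hi y)) \<delta>)"
      using cpd P' j by blast
    have tr: "meets (a, b, \<alpha>) (cball (\<phi> h (\<pi> u)) \<delta>)" if mu: "meets (a, b, \<phi> hi \<circ> \<alpha>) (cball (\<pi> u) \<delta>)" for u
    proof -
      obtain t where t: "t \<in> {a..b}" "dist (\<pi> u) (\<phi> hi (\<alpha> t)) \<le> \<delta>" using mu by (auto simp: meets_def)
      have "dist (\<phi> h (\<pi> u)) (\<alpha> t) = dist (\<phi> h (\<pi> u)) (\<phi> h (\<phi> hi (\<alpha> t)))" using c1 by simp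
      also have "\<dots> = dist (\<pi> u) (\<phi> hi (\<alpha> t))" using iso h by blast
      finally show ?thesis using t by (auto simp: meets_def intro!: bexI[of _ t])
    qed
    show ?thesis using tr m Pe by simp
  qed
  show ?thesis unfolding constricting_map_def hi_def[symmetric] using A1 A2 A3 by blast
qed

lemma sub_pow:
  fixes \<phi> :: "'g \<Rightarrow> 'x::metric_space \<Rightarrow> 'x"
  assumes ga: "group_action G UNIV \<phi>"
    and iso: "\<forall>g\<in>carrier G. \<forall>x y. dist (\<phi> g x) (\<phi> g y) = dist x y"
    and g: "g \<in> carrier G"
  shows "dist z0 (\<phi> (g [^]\<^bsub>G\<^esub> (a + b :: nat)) z0) \<le> dist z0 (\<phi> (g [^]\<^bsub>G\<^esub> a) z0) + dist z0 (\<phi> (g [^]\<^bsub>G\<^esub> b) z0)"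
proof -
  have grp: "group G" using ga_group[OF ga] .
  have ca: "g [^]\<^bsub>G\<^esub> a \<in> carrier G" "g [^]\<^bsub>G\<^esub> b \<in> carrier G"
    using grp g by (simp_all add: group.is_monoid monoid.nat_pow_closed)
  have "g [^]\<^bsub>G\<^esub> (a + b) = g [^]\<^bsub>G\<^esub> a \<otimes>\<^bsub>G\<^esub> g [^]\<^bsub>G\<^esub> b"
    using grp g by (simp add: group.is_monoid monoid.nat_pow_mult)
  hence e: "\<phi> (g [^]\<^bsub>G\<^esub> (a + b)) z0 = \<phi> (g [^]\<^bsub>G\<^esub> a) (\<phi> (g [^]\<^bsub>G\<^esub> b) z0)"
    using group_action.composition_rule[OF ga UNIV_I ca] by simp
  have "dist z0 (\<phi> (g [^]\<^bsub>G\<^esub> a) (\<phi> (g [^]\<^bsub>G\<^esub> b) z0)) \<le> dist z0 (\<phi> (g [^]\<^bsub>G\<^esub> a) z0) + dist (\<phi> (g [^]\<^bsub>G\<^esub> a) z0) (\<phi> (g [^]\<^bsub>G\<^esub> a) (\<phi> (g [^]\<^bsub>G\<^esub> b) z0))"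
    by (rule dist_triangle)
  also have "dist (\<phi> (g [^]\<^bsub>G\<^esub> a) z0) (\<phi> (g [^]\<^bsub>G\<^esub> a) (\<phi> (g [^]\<^bsub>G\<^esub> b) z0)) = dist z0 (\<phi> (g [^]\<^bsub>G\<^esub> b) z0)"
    using iso ca by blast
  finally show ?thesis using e by simp
qed

lemma mult_pow:
  fixes \<phi> :: "'g \<Rightarrow> 'x::metric_space \<Rightarrow> 'x"
  assumes ga: "group_action G UNIV \<phi>"
    and iso: "\<forall>g\<in>carrier G. \<forall>x y. dist (\<phi> g x) (\<phi> g y) = dist x y"
    and g: "g \<in> carrier G"
  shows "dist z0 (\<phi> (g [^]\<^bsub>G\<^esub> (q * n :: nat)) z0) \<le> real q * dist z0 (\<phi> (g [^]\<^bsub>G\<^esub> n) z0)"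
proof (induction q)
  case 0
  have "\<phi> (g [^]\<^bsub>G\<^esub> (0::nat)) z0 = z0"
    using group_action.id_eq_one[OF ga] by (simp, metis UNIV_I restrict_apply')
  then show ?case by simp
next
  case (Suc q)
  have "dist z0 (\<phi> (g [^]\<^bsub>G\<^esub> (n + q * n)) z0) \<le> dist z0 (\<phi> (g [^]\<^bsub>G\<^esub> n) z0) + dist z0 (\<phi> (g [^]\<^bsub>G\<^esub> (q * n)) z0)"
    by (rule sub_pow[OF ga iso g])
  then show ?case using Suc by (simp add: algebra_simps)
qed

lemma divmod_pow:
  fixes \<phi> :: "'g \<Rightarrow> 'x::metric_space \<Rightarrow> 'x"
  assumes ga: "group_action G UNIV \<phi>"
    and iso: "\<forall>g\<in>carrier G. \<forall>x y. dist (\<phi> g x) (\<phi> g y) = dist x y"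
    and g: "g \<in> carrier G" and n: "n > 0"
  shows "dist z0 (\<phi> (g [^]\<^bsub>G\<^esub> (k::nat)) z0) \<le> real (k div n) * dist z0 (\<phi> (g [^]\<^bsub>G\<^esub> n) z0)
           + (\<Sum>r<n. dist z0 (\<phi> (g [^]\<^bsub>G\<^esub> r) z0))"
proof -
  have k: "k = (k div n) * n + k mod n" by simp
  have "dist z0 (\<phi> (g [^]\<^bsub>G\<^esub> ((k div n) * n + k mod n)) z0)
     \<le> dist z0 (\<phi> (g [^]\<^bsub>G\<^esub> ((k div n) * n)) z0) + dist z0 (\<phi> (g [^]\<^bsub>G\<^esub> (k mod n)) z0)"
    by (rule sub_pow[OF ga iso g])
  moreover have "dist z0 (\<phi> (g [^]\<^bsub>G\<^esub> ((k div n) * n)) z0) \<le> real (k div n) * dist z0 (\<phi> (g [^]\<^bsub>G\<^esub> n) z0)"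
    by (rule mult_pow[OF ga iso g])
  moreover have "dist z0 (\<phi> (g [^]\<^bsub>G\<^esub> (k mod n)) z0) \<le> (\<Sum>r<n. dist z0 (\<phi> (g [^]\<^bsub>G\<^esub> r) z0))"
    by (rule member_le_sum) (use n in auto)
  ultimately have "dist z0 (\<phi> (g [^]\<^bsub>G\<^esub> ((k div n) * n + k mod n)) z0) \<le> real (k div n) * dist z0 (\<phi> (g [^]\<^bsub>G\<^esub> n) z0)
           + (\<Sum>r<n. dist z0 (\<phi> (g [^]\<^bsub>G\<^esub> r) z0))" by linarith
  thus ?thesis by simp
qed

lemma fekete:
  fixes \<phi> :: "'g \<Rightarrow> 'x::metric_space \<Rightarrow> 'x"
  assumes ga: "group_action G UNIV \<phi>"
    and iso: "\<forall>g\<in>carrier G. \<forall>x y. dist (\<phi> g x) (\<phi> g y) = dist x y"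
    and g: "g \<in> carrier G" and n: "n > 0"
  shows "asymp_transl G \<phi> g x0 \<le> ereal (dist z0 (\<phi> (g [^]\<^bsub>G\<^esub> (n::nat)) z0) / real n)"
proof -
  define D where "D = dist z0 (\<phi> (g [^]\<^bsub>G\<^esub> n) z0)"
  define K where "K = 2 * dist x0 z0 + (\<Sum>r<n. dist z0 (\<phi> (g [^]\<^bsub>G\<^esub> r) z0))"
  have D0: "D \<ge> 0" unfolding D_def by simp
  have b: "dist x0 (\<phi> (g [^]\<^bsub>G\<^esub> k) x0) / real k \<le> K / real k + D / real n" if k: "k \<ge> 1" for k :: nat
  proof -
    have cg: "g [^]\<^bsub>G\<^esub> k \<in> carrier G" using ga_group[OF ga] g
      by (simp add: group.is_monoid monoid.nat_pow_closed)
    have "dist x0 (\<phi> (g [^]\<^bsub>G\<^esub> k) x0) \<le> dist x0 z0 + dist z0 (\<phi> (g [^]\<^bsub>G\<^esub> k) z0) + dist (\<phi> (g [^]\<^bsub>G\<^esub> k) z0) (\<phi> (g [^]\<^bsub>G\<^esub> k) x0)"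
      by (rule tri3)
    also have "dist (\<phi> (g [^]\<^bsub>G\<^esub> k) z0) (\<phi> (g [^]\<^bsub>G\<^esub> k) x0) = dist x0 z0"
      using iso cg by (simp add: dist_commute)
    finally have 1: "dist x0 (\<phi> (g [^]\<^bsub>G\<^esub> k) x0) \<le> K + real (k div n) * D"
      using divmod_pow[OF ga iso g n, of z0 k] unfolding K_def D_def by linarith
    have "real (k div n) \<le> real k / real n"
      by (rule of_nat_div_le_of_nat)
    hence "real (k div n) * D \<le> real k / real n * D" using D0 mult_right_mono by blast
    hence "dist x0 (\<phi> (g [^]\<^bsub>G\<^esub> k) x0) \<le> K + real k * (D / real n)" using 1 by simp
    hence "dist x0 (\<phi> (g [^]\<^bsub>G\<^esub> k) x0) / real k \<le> (K + real k * (D / real n)) / real k"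
      using k by (simp add: divide_right_mono)
    also have "\<dots> = K / real k + D / real n" using k by (simp add: field_simps)
    finally show ?thesis .
  qed
  have "asymp_transl G \<phi> g x0 \<le> limsup (\<lambda>k. ereal (K / real k + D / real n))"
    unfolding asymp_transl_def
    by (rule Limsup_mono) (use b in \<open>auto simp: eventually_sequentially intro!: exI[of _ 1]\<close>)
  also have "limsup (\<lambda>k. ereal (K / real k + D / real n)) = ereal (D / real n)"
  proof (rule lim_imp_Limsup)
    show "\<not> trivial_limit sequentially" by simp
    have "(\<lambda>k. K / real k + D / real n) \<longlonglongrightarrow> 0 + D / real n"
      by (intro tendsto_add lim_const_over_n tendsto_const)
    thus "(\<lambda>k. ereal (K / real k + D / real n)) \<longlonglongrightarrow> ereal (D / real n)"
      by (simp add: tendsto_ereal)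
  qed
  finally show ?thesis unfolding D_def .
qed

theorem mainTheorem17:
  fixes G :: "('g, 'b) monoid_scheme" and \<phi> :: "'g \<Rightarrow> 'x::metric_space \<Rightarrow> 'x"
    and \<Gamma> :: "'x rpath set" and \<mu> \<nu> \<delta> :: real and g :: 'g and A :: "'x set"
    and \<pi> :: "'x \<Rightarrow> 'x" and x0 :: 'x
  assumes "path_system_group \<mu> \<nu> G \<phi> \<Gamma>"
    and "constricting_element G \<phi> \<Gamma> \<delta> g A \<pi>"
  shows "\<exists>\<theta>\<ge>0. \<forall>x x'. \<forall>m::int.
           ereal (proj_dist \<pi> x (\<phi> (g [^]\<^bsub>G\<^esub> m) x'))
             \<ge> ereal \<bar>real_of_int m\<bar> * asymp_transl G \<phi> g x0 - ereal (proj_dist \<pi> x x') - ereal \<theta>"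
proof -
  have ga: "group_action G UNIV \<phi>"
    and iso: "\<forall>g\<in>carrier G. \<forall>x y. dist (\<phi> g x) (\<phi> g y) = dist x y"
    and inv: "\<forall>g\<in>carrier G. \<forall>(a, b, \<alpha>)\<in>\<Gamma>. (a, b, \<phi> g \<circ> \<alpha>) \<in> \<Gamma>"
    and sub: "\<forall>(a, b, \<alpha>)\<in>\<Gamma>. \<forall>s t. a \<le> s \<longrightarrow> s \<le> t \<longrightarrow> t \<le> b \<longrightarrow> (s, t, \<alpha>) \<in> \<Gamma>"
    and join: "\<forall>x y. \<exists>P\<in>\<Gamma>. joins P x y"
    and Qg: "\<forall>P\<in>\<Gamma>. quasi_geodesic \<mu> \<nu> P"
    using assms(1) unfolding path_system_group_def proper_isometric_action_def by blast+
  have g: "g \<in> carrier G" and Ainv: "\<forall>m::int. \<phi> (g [^]\<^bsub>G\<^esub> m) ` A = A"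
    and cp: "constricting_map \<Gamma> \<delta> A \<pi>" and ex: "\<exists>a\<in>A. \<forall>y\<in>A. \<exists>m::int. dist (\<phi> (g [^]\<^bsub>G\<^esub> m) a) y \<le> \<delta>"
    using assms(2) unfolding constricting_element_def by blast+
  have grp: "group G" using ga_group[OF ga] .
  obtain a where aA: "a \<in> A" using ex by blast
  have d0: "\<delta> \<ge> 0" using cp aA unfolding constricting_map_def
    by (meson zero_le_dist order_trans)
  define \<theta> where "\<theta> = \<bar>\<mu>\<bar> * \<delta> + \<bar>\<nu>\<bar> + 4 * \<delta>"
  have th0: "\<theta> \<ge> 0" unfolding \<theta>_def using d0 by (simp add: add_nonneg_nonneg)
  have main: "ereal (proj_dist \<pi> x (\<phi> (g [^]\<^bsub>G\<^esub> m) x'))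
             \<ge> ereal \<bar>real_of_int m\<bar> * asymp_transl G \<phi> g x0 - ereal (proj_dist \<pi> x x') - ereal \<theta>"
    for x x' and m :: int
  proof -
    define h where "h = g [^]\<^bsub>G\<^esub> m"
    have h: "h \<in> carrier G" unfolding h_def using grp g by (simp add: group.int_pow_closed)
    have hinv: "inv\<^bsub>G\<^esub> h = g [^]\<^bsub>G\<^esub> (- m)" unfolding h_def using grp g by (simp add: group.int_pow_neg)
    have hA: "\<phi> h ` A = A" using Ainv h_def by blast
    have hiA: "\<phi> (inv\<^bsub>G\<^esub> h) ` A = A" using Ainv hinv by metis
    define \<psi> where "\<psi> = (\<lambda>z. \<phi> h (\<pi> (\<phi> (inv\<^bsub>G\<^esub> h) z)))"
    have cq: "constricting_map \<Gamma> \<delta> A \<psi>" unfolding \<psi>_def by (rule conj_map[OF ga iso inv h hA hiA cp])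
    define z where "z = \<phi> h x'"
    define o' where "o' = \<pi> x'"
    have "dist (\<pi> z) (\<psi> z) \<le> \<theta>" unfolding \<theta>_def by (rule uniq_proj[OF Qg sub join cp cq d0])
    moreover have "\<psi> z = \<phi> h o'" unfolding \<psi>_def z_def o'_def using act_inv[OF ga h] by simp
    ultimately have c1: "dist (\<pi> z) (\<phi> h o') \<le> \<theta>" by simp
    define E where "E = dist o' (\<phi> h o')"
    have c2: "E - \<theta> - proj_dist \<pi> x x' \<le> proj_dist \<pi> x (\<phi> (g [^]\<^bsub>G\<^esub> m) x')"
      unfolding proj_dist_def E_def h_def[symmetric] z_def[symmetric] o'_def[symmetric]
      using c1 tri3[of o' "\<phi> h o'" "\<pi> x" "\<pi> z"] dist_commute[of o' "\<pi> x"] dist_commute[of "\<pi> z" "\<phi> h o'"]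
      by linarith
    have c3: "ereal \<bar>real_of_int m\<bar> * asymp_transl G \<phi> g x0 \<le> ereal E"
    proof (cases "m = 0")
      case True thus ?thesis unfolding E_def by (simp add: zero_ereal_def[symmetric])
    next
      case False
      define n where "n = nat \<bar>m\<bar>"
      have n: "n > 0" using False n_def by simp
      have mn: "\<bar>real_of_int m\<bar> = real n" using n_def by simp
      have cgn: "g [^]\<^bsub>G\<^esub> n \<in> carrier G" using grp g by (simp add: group.is_monoid monoid.nat_pow_closed)
      have En: "E = dist o' (\<phi> (g [^]\<^bsub>G\<^esub> n) o')"
      proof (cases "m > 0")
        case True
        hence "m = int n" using n_def by simp
        hence "h = g [^]\<^bsub>G\<^esub> n" unfolding h_def by (simp add: int_pow_int)
        thus ?thesis unfolding E_def by simp
      next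
        case False
        hence "m = - int n" using n_def \<open>m \<noteq> 0\<close> by simp
        hence hh: "h = inv\<^bsub>G\<^esub> (g [^]\<^bsub>G\<^esub> n)" unfolding h_def using grp g by (simp add: group.int_pow_neg_int)
        have "E = dist (\<phi> (g [^]\<^bsub>G\<^esub> n) o') (\<phi> (g [^]\<^bsub>G\<^esub> n) (\<phi> h o'))"
          unfolding E_def using iso cgn by simp
        also have "\<dots> = dist (\<phi> (g [^]\<^bsub>G\<^esub> n) o') o'" unfolding hh using act_inv[OF ga cgn] by simp
        finally show ?thesis by (simp add: dist_commute)
      qed
      have "asymp_transl G \<phi> g x0 \<le> ereal (E / real n)" unfolding En by (rule fekete[OF ga iso g n])
      hence "ereal (real n) * asymp_transl G \<phi> g x0 \<le> ereal (real n) * ereal (E / real n)"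
        by (rule ereal_mult_left_mono) simp
      also have "\<dots> = ereal E" using n by simp
      finally show ?thesis using mn by simp
    qed
    have "ereal \<bar>real_of_int m\<bar> * asymp_transl G \<phi> g x0 - ereal (proj_dist \<pi> x x') - ereal \<theta>
          \<le> ereal E - ereal (proj_dist \<pi> x x') - ereal \<theta>"
      by (intro ereal_minus_mono c3 order_refl)
    also have "\<dots> = ereal (E - \<theta> - proj_dist \<pi> x x')" by simp
    also have "\<dots> \<le> ereal (proj_dist \<pi> x (\<phi> (g [^]\<^bsub>G\<^esub> m) x'))" using c2 by simp
    finally show ?thesis .
  qed
  show ?thesis using th0 main by blast
qed

end
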